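(* Let $M=(r,q,u)$ be an IC and IR mechanism. (1) If $M$ is undominated, then $M$ is floor-randomized, left continuous, and satisfies DD. (2) If $M$ is dominated, then $M$ is dominated by a mechanism that is floor-randomized, left continuous and satisfies DD.
   Context: Setting. Let $\Theta=[\underline\theta,\overline\theta]$ with $0<\underline\theta<\overline\theta$. Let $c>0$ and let $P:\mathbb R_+\to\mathbb R_+$ be continuous and strictly decreasing with $P(\overline q)=0$ for some $\overline q>0$. Put $V(q)=\int_0^q P(z)\,dz$ and $\mathrm{TS}(\theta,q)=V(q)-c-\theta q$ for $q>0$, $\mathrm{TS}(\theta,0)=0$. Assume (A2): $\mathrm{TS}(\overline\theta,P^{-1}(\overline\theta))>0$. A mechanism is a triple $M=(r,q,u)$ of functions $r:\Theta\to[0,1]$, $q:\Theta\to[0,\overline q]$, $u:\Theta\to\mathbb R$ with $q(\theta)=0$ if and only if $r(\theta)=0$. It is IC if $u(\theta)\ge u(\theta')+(\theta'-\theta)q(\theta')r(\theta')$ for all $\theta,\theta'\in\Theta$, and IR if $u(\theta)\ge 0$ for all $\theta$. (Known fact: $M$ is IC iff $\theta\mapsto q(\theta)r(\theta)$ is nonincreasing and $u(\theta)=u(\overline\theta)+\int_\theta^{\overline\theta}q(z)r(z)\,dz$ for all $\theta$; an IC mechanism is IR iff $u(\overline\theta)\ge0$.) Fix $\alpha\in[0,1)$. The regulator's surplus at $\theta$ is $\mathrm{RS}_\alpha(\theta,M)=r(\theta)\,\mathrm{TS}(\theta,q(\theta))-(1-\alpha)u(\theta)$. An IC and IR mechanism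 $\tilde M$ dominates an IC and IR mechanism $M$ if $\mathrm{RS}_\alpha(\theta,\tilde M)\ge \mathrm{RS}_\alpha(\theta,M)$ for all $\theta\in\Theta$ with strict inequality for some $\theta$; $M$ is undominated if it is IC, IR and not dominated by any IC and IR mechanism. The quantity floor $\hat q$ is the unique $q>0$ with $V(q)-qP(q)=c$. A mechanism $(r,q,u)$ is floor-randomized if it is IC, IR, $u(\overline\theta)=0$, and $\Theta$ can be partitioned into three pairwise disjoint (possibly empty) intervals $\Theta_1,\Theta_{01},\Theta_0$, with every element of $\Theta_0$ larger than every element of $\Theta_{01}$ and every element of $\Theta_{01}$ larger than every element of $\Theta_1$, such that: $q(\theta)\ge\hat q$ and $r(\theta)=1$ for $\theta\in\Theta_1$; $q(\theta)=\hat q$ and $r(\theta)\in(0,1)$ for $\theta\in\Theta_{01}$; $q(\theta)=r(\theta)=0$ for $\theta\in\Theta_0$. The efficient quantity is $q_e(\theta)=P^{-1}(\theta)$. A mechanism satisfies downward distortion (DD) if $q(\theta)\le q_e(\theta)$ for all $\theta$, with equality at $\theta=\underline\theta$; it satisfies strict DD if moreover $q(\theta)<q_e(\theta)$ for every $\theta>\underline\theta$. A mechanism is left continuous if $\theta\mapsto q(\theta)r(\theta)$ is left continuous at every $\theta\in(\underline\theta,\overline\theta]$. *)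

theory Defs
  imports "HOL-Analysis.Analysis"
begin

text \<open>Type space Theta = {tlo..thi}. A mechanism is given by three functions r q u
  (only their values on Theta matter).\<close>

definition V :: "(real \<Rightarrow> real) \<Rightarrow> real \<Rightarrow> real" where
  "V P q = integral {0..q} P"

definition TS :: "real \<Rightarrow> (real \<Rightarrow> real) \<Rightarrow> real \<Rightarrow> real \<Rightarrow> real" where
  "TS c P \<theta> q = (if q > 0 then V P q - c - \<theta> * q else 0)"

definition q_eff :: "(real \<Rightarrow> real) \<Rightarrow> real \<Rightarrow> real \<Rightarrow> real" where
  "q_eff P qbar \<theta> = (THE q. 0 \<le> q \<and> q \<le> qbar \<and> P q = \<theta>)"

definition q_floor :: "real \<Rightarrow> (real \<Rightarrow> real) \<Rightarrow> real \<Rightarrow> real" where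
  "q_floor c P qbar = (THE q. 0 < q \<and> q \<le> qbar \<and> V P q - q * P q = c)"

definition mechanism :: "real \<Rightarrow> real \<Rightarrow> real \<Rightarrow> (real \<Rightarrow> real) \<Rightarrow> (real \<Rightarrow> real) \<Rightarrow> (real \<Rightarrow> real) \<Rightarrow> bool" where
  "mechanism tlo thi qbar r q u \<longleftrightarrow>
     (\<forall>\<theta>\<in>{tlo..thi}. 0 \<le> r \<theta> \<and> r \<theta> \<le> 1 \<and> 0 \<le> q \<theta> \<and> q \<theta> \<le> qbar \<and> (q \<theta> = 0 \<longleftrightarrow> r \<theta> = 0))"

definition IC :: "real \<Rightarrow> real \<Rightarrow> (real \<Rightarrow> real) \<Rightarrow> (real \<Rightarrow> real) \<Rightarrow> (real \<Rightarrow> real) \<Rightarrow> bool" where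
  "IC tlo thi r q u \<longleftrightarrow>
     (\<forall>\<theta>\<in>{tlo..thi}. \<forall>\<theta>'\<in>{tlo..thi}. u \<theta> \<ge> u \<theta>' + (\<theta>' - \<theta>) * q \<theta>' * r \<theta>')"

definition IR :: "real \<Rightarrow> real \<Rightarrow> (real \<Rightarrow> real) \<Rightarrow> bool" where
  "IR tlo thi u \<longleftrightarrow> (\<forall>\<theta>\<in>{tlo..thi}. u \<theta> \<ge> 0)"

definition IC_IR :: "real \<Rightarrow> real \<Rightarrow> real \<Rightarrow> (real \<Rightarrow> real) \<Rightarrow> (real \<Rightarrow> real) \<Rightarrow> (real \<Rightarrow> real) \<Rightarrow> bool" where
  "IC_IR tlo thi qbar r q u \<longleftrightarrow> mechanism tlo thi qbar r q u \<and> IC tlo thi r q u \<and> IR tlo thi u"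

definition RS :: "real \<Rightarrow> (real \<Rightarrow> real) \<Rightarrow> real \<Rightarrow> real \<Rightarrow> (real \<Rightarrow> real) \<Rightarrow> (real \<Rightarrow> real) \<Rightarrow> (real \<Rightarrow> real) \<Rightarrow> real" where
  "RS c P \<alpha> \<theta> r q u = r \<theta> * TS c P \<theta> (q \<theta>) - (1 - \<alpha>) * u \<theta>"

definition dominates :: "real \<Rightarrow> real \<Rightarrow> real \<Rightarrow> real \<Rightarrow> (real \<Rightarrow> real) \<Rightarrow> real \<Rightarrow>
    (real \<Rightarrow> real) \<Rightarrow> (real \<Rightarrow> real) \<Rightarrow> (real \<Rightarrow> real) \<Rightarrow>
    (real \<Rightarrow> real) \<Rightarrow> (real \<Rightarrow> real) \<Rightarrow> (real \<Rightarrow> real) \<Rightarrow> bool" where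
  "dominates tlo thi qbar c P \<alpha> r' q' u' r q u \<longleftrightarrow>
     IC_IR tlo thi qbar r' q' u' \<and> IC_IR tlo thi qbar r q u \<and>
     (\<forall>\<theta>\<in>{tlo..thi}. RS c P \<alpha> \<theta> r' q' u' \<ge> RS c P \<alpha> \<theta> r q u) \<and>
     (\<exists>\<theta>\<in>{tlo..thi}. RS c P \<alpha> \<theta> r' q' u' > RS c P \<alpha> \<theta> r q u)"

definition undominated :: "real \<Rightarrow> real \<Rightarrow> real \<Rightarrow> real \<Rightarrow> (real \<Rightarrow> real) \<Rightarrow> real \<Rightarrow>
    (real \<Rightarrow> real) \<Rightarrow> (real \<Rightarrow> real) \<Rightarrow> (real \<Rightarrow> real) \<Rightarrow> bool" where
  "undominated tlo thi qbar c P \<alpha> r q u \<longleftrightarrow>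
     IC_IR tlo thi qbar r q u \<and> \<not> (\<exists>r' q' u'. dominates tlo thi qbar c P \<alpha> r' q' u' r q u)"

definition floor_randomized :: "real \<Rightarrow> real \<Rightarrow> real \<Rightarrow> real \<Rightarrow> (real \<Rightarrow> real) \<Rightarrow>
    (real \<Rightarrow> real) \<Rightarrow> (real \<Rightarrow> real) \<Rightarrow> (real \<Rightarrow> real) \<Rightarrow> bool" where
  "floor_randomized tlo thi qbar c P r q u \<longleftrightarrow>
     IC_IR tlo thi qbar r q u \<and> u thi = 0 \<and>
     (\<exists>T1 T01 T0. is_interval T1 \<and> is_interval T01 \<and> is_interval T0 \<and>
        T1 \<union> T01 \<union> T0 = {tlo..thi} \<and>
        T1 \<inter> T01 = {} \<and> T1 \<inter> T0 = {} \<and> T01 \<inter> T0 = {} \<and>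
        (\<forall>x\<in>T0. \<forall>y\<in>T01. y < x) \<and> (\<forall>x\<in>T01. \<forall>y\<in>T1. y < x) \<and>
        (\<forall>\<theta>\<in>T1. q \<theta> \<ge> q_floor c P qbar \<and> r \<theta> = 1) \<and>
        (\<forall>\<theta>\<in>T01. q \<theta> = q_floor c P qbar \<and> 0 < r \<theta> \<and> r \<theta> < 1) \<and>
        (\<forall>\<theta>\<in>T0. q \<theta> = 0 \<and> r \<theta> = 0))"

definition left_continuous_mech :: "real \<Rightarrow> real \<Rightarrow> (real \<Rightarrow> real) \<Rightarrow> (real \<Rightarrow> real) \<Rightarrow> bool" where
  "left_continuous_mech tlo thi r q \<longleftrightarrow>
     (\<forall>\<theta>\<in>{tlo<..thi}. continuous (at_left \<theta>) (\<lambda>t. q t * r t))"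

definition downward_distortion :: "real \<Rightarrow> real \<Rightarrow> (real \<Rightarrow> real) \<Rightarrow> real \<Rightarrow> (real \<Rightarrow> real) \<Rightarrow> bool" where
  "downward_distortion tlo thi P qbar q \<longleftrightarrow>
     (\<forall>\<theta>\<in>{tlo..thi}. q \<theta> \<le> q_eff P qbar \<theta>) \<and> q tlo = q_eff P qbar tlo"

end

theory Submission imports Defs begin

lemma telescope_bound:
  fixes h z :: "real \<Rightarrow> real"
  assumes se: "s < e"
    and step: "\<And>x y. s \<le> x \<Longrightarrow> x < y \<Longrightarrow> y \<le> e \<Longrightarrow> (y - x) * (z y - z x) \<le> h x - h y"
    and zb: "\<And>x. x \<in> {s..e} \<Longrightarrow> 0 \<le> z x \<and> z x \<le> B"
  shows "0 \<le> h s - h e"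
proof -
  have main: "- ((e - s) / real n) * B \<le> h s - h e" if n: "n > 0" for n :: nat
  proof -
    define d where "d = (e - s) / real n"
    define T where "T k = s + real k * d" for k :: nat
    have dpos: "d > 0" using se n by (simp add: d_def)
    have Tn: "T n = e" using n by (simp add: T_def d_def)
    have T0: "T 0 = s" by (simp add: T_def)
    have Tin: "s \<le> T k \<and> T k \<le> e" if "k \<le> n" for k
    proof -
      have "real k * d \<le> real n * d" using that dpos by (simp add: mult_right_mono)
      moreover have "0 \<le> real k * d" using dpos by simp
      moreover have "real n * d = e - s" using n by (simp add: d_def)
      ultimately show ?thesis by (simp add: T_def)
    qed
    have Tsuc: "T (Suc k) - T k = d" for k by (simp add: T_def algebra_simps)
    have "(\<Sum>k<n. d * (z (T (Suc k)) - z (T k))) \<le> (\<Sum>k<n. h (T k) - h (T (Suc k)))"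
    proof (rule sum_mono)
      fix k assume "k \<in> {..<n}"
      then have k: "k < n" by simp
      have "(T (Suc k) - T k) * (z (T (Suc k)) - z (T k)) \<le> h (T k) - h (T (Suc k))"
        by (rule step) (use Tin[of k] Tin[of "Suc k"] k Tsuc[of k] dpos in auto)
      then show "d * (z (T (Suc k)) - z (T k)) \<le> h (T k) - h (T (Suc k))" using Tsuc by simp
    qed
    also have "(\<Sum>k<n. h (T k) - h (T (Suc k))) = h s - h e"
      using sum_lessThan_telescope'[of "\<lambda>k. h (T k)" n] Tn T0 by simp
    finally have 1: "d * (\<Sum>k<n. (z (T (Suc k)) - z (T k))) \<le> h s - h e"
      by (simp add: sum_distrib_left)
    have "(\<Sum>k<n. (z (T (Suc k)) - z (T k))) = z e - z s"
      using sum_lessThan_telescope[of "\<lambda>k. z (T k)" n] Tn T0 by simp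
    moreover have "z e - z s \<ge> - B" using zb[of e] zb[of s] se by auto
    ultimately have "d * (- B) \<le> h s - h e" using 1 dpos
      by (metis mult_left_mono order_trans less_imp_le)
    then show ?thesis by (simp add: d_def)
  qed
  show ?thesis
  proof (rule ccontr)
    assume "\<not> 0 \<le> h s - h e"
    then have neg: "h s - h e < 0" by simp
    have B0: "0 \<le> B" using zb[of s] se by auto
    obtain n :: nat where n: "(e - s) * B / (h e - h s) < real n" using reals_Archimedean2 by blast
    have np: "0 < (e - s) * B / (h e - h s)" if "B > 0" using that neg se by simp
    show False
    proof (cases "B = 0")
      case True
      then show False using main[of 1] neg by simp
    next
      case False
      then have Bp: "B > 0" using B0 by simp
      have npos: "n > 0" using np[OF Bp] n by (cases n) auto
      have "(e - s) * B < real n * (h e - h s)" using n neg by (simp add: field_simps)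
      then have "(e - s) / real n * B < h e - h s" using npos by (simp add: field_simps)
      then show False using main[OF npos] by simp
    qed
  qed
qed

definition anti :: "real set \<Rightarrow> (real \<Rightarrow> real) \<Rightarrow> bool" where
  "anti S z \<longleftrightarrow> (\<forall>x\<in>S. \<forall>y\<in>S. x \<le> y \<longrightarrow> z y \<le> z x)"

lemma anti_int: assumes "anti {s..e} z" shows "z integrable_on {s..e}"
proof -
  have "mono_on {s..e} (\<lambda>x. - z x)" using assms unfolding anti_def monotone_on_def by auto
  then have "(\<lambda>x. - z x) integrable_on {s..e}" by (rule integrable_on_mono_on)
  then have "(\<lambda>x. - (- z x)) integrable_on {s..e}" by (rule integrable_neg)
  then show ?thesis by simp
qed

lemma anti_sub: "anti S z \<Longrightarrow> T \<subseteq> S \<Longrightarrow> anti T z" unfolding anti_def by blast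

lemma anti_int_bounds:
  assumes "anti {x..y} z" "x \<le> y"
  shows "(y - x) * z y \<le> integral {x..y} z" "integral {x..y} z \<le> (y - x) * z x"
proof -
  have i: "z integrable_on {x..y}" by (rule anti_int[OF assms(1)])
  have "integral {x..y} (\<lambda>_. z y) \<le> integral {x..y} z"
    by (rule integral_le) (use i assms in \<open>auto simp: anti_def\<close>)
  then show "(y - x) * z y \<le> integral {x..y} z" using assms by simp
  have "integral {x..y} z \<le> integral {x..y} (\<lambda>_. z x)"
    by (rule integral_le) (use i assms in \<open>auto simp: anti_def\<close>)
  then show "integral {x..y} z \<le> (y - x) * z x" using assms by simp
qed

lemma int_le_w:
  fixes z w :: "real \<Rightarrow> real"
  assumes an: "anti {s..e} z" and se: "s \<le> e"
    and zb: "\<And>x. x \<in> {s..e} \<Longrightarrow> 0 \<le> z x \<and> z x \<le> B"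
    and w: "\<And>x y. s \<le> x \<Longrightarrow> x < y \<Longrightarrow> y \<le> e \<Longrightarrow> (y - x) * z y \<le> w x - w y"
  shows "integral {s..e} z \<le> w s - w e"
proof (cases "s = e")
  case True then show ?thesis by simp
next
  case False
  then have se': "s < e" using se by simp
  define h where "h x = w x - integral {x..e} z" for x
  have "0 \<le> h s - h e"
  proof (rule telescope_bound[OF se' _ zb])
    fix x y assume xy: "s \<le> x" "x < y" "y \<le> e"
    have ane: "anti {x..e} z" by (rule anti_sub[OF an]) (use xy in auto)
    have "integral {x..y} z + integral {y..e} z = integral {x..e} z"
      using Henstock_Kurzweil_Integration.integral_combine[where f=z and a=x and c=y and b=e]
        xy anti_int[OF ane] by auto
    moreover have "integral {x..y} z \<le> (y - x) * z x"
      by (rule anti_int_bounds(2)) (rule anti_sub[OF an], use xy in auto)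
    moreover have "(y - x) * z y \<le> w x - w y" by (rule w) (use xy in auto)
    ultimately show "(y - x) * (z y - z x) \<le> h x - h y" unfolding h_def
      by (simp add: algebra_simps)
  qed
  then show ?thesis unfolding h_def by simp
qed


locale setting =
  fixes a b c qbar \<alpha> :: real and P :: "real \<Rightarrow> real"
  assumes a_pos: "0 < a" and ab: "a < b" and c_pos: "0 < c" and qbar_pos: "0 < qbar"
  and Pcont: "continuous_on {0..qbar} P"
  and Pdec: "\<forall>x y. 0 \<le> x \<longrightarrow> x < y \<longrightarrow> y \<le> qbar \<longrightarrow> P y < P x"
  and Pqbar: "P qbar = 0"
  and A2: "\<exists>qe\<in>{0..qbar}. P qe = b \<and> TS c P b qe > 0"
  and al0: "0 \<le> \<alpha>" and al1: "\<alpha> < 1"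
begin

lemma Plt: "0 \<le> x \<Longrightarrow> x < y \<Longrightarrow> y \<le> qbar \<Longrightarrow> P y < P x"
  using Pdec by blast

lemma Ple: "0 \<le> x \<Longrightarrow> x \<le> y \<Longrightarrow> y \<le> qbar \<Longrightarrow> P y \<le> P x"
  using Plt by (cases "x = y") (auto intro: less_imp_le)

lemma Pint: "0 \<le> p \<Longrightarrow> q \<le> qbar \<Longrightarrow> P integrable_on {p..q}"
proof -
  assume h: "0 \<le> p" "q \<le> qbar"
  have "P integrable_on {0..qbar}" using Pcont integrable_continuous_real by blast
  then show ?thesis
    by (rule integrable_subinterval_real) (use h in auto)
qed

lemma Vdiff: "0 \<le> p \<Longrightarrow> p \<le> q \<Longrightarrow> q \<le> qbar \<Longrightarrow> V P q - V P p = integral {p..q} P"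
proof -
  assume h: "0 \<le> p" "p \<le> q" "q \<le> qbar"
  have "integral {0..p} P + integral {p..q} P = integral {0..q} P"
    using Henstock_Kurzweil_Integration.integral_combine[where f=P and a=0 and c=p and b=q] h Pint[of 0 q] by auto
  then show ?thesis unfolding V_def by simp
qed

lemma C: assumes "0 \<le> p" "p \<le> qbar" "0 \<le> q" "q \<le> qbar"
  shows "V P q - V P p \<le> (q - p) * P p"
proof (cases "p \<le> q")
  case True
  have "integral {p..q} P \<le> integral {p..q} (\<lambda>_. P p)"
    by (rule integral_le) (use assms True Pint[of p q] Ple in auto)
  then show ?thesis using Vdiff[of p q] assms True by simp
next
  case False
  have "integral {q..p} (\<lambda>_. P p) \<le> integral {q..p} P"
    by (rule integral_le) (use assms False Pint[of q p] Ple in auto)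
  then show ?thesis using Vdiff[of q p] assms False by (simp add: algebra_simps)
qed

lemma Cs: assumes "0 \<le> p" "p \<le> qbar" "0 \<le> q" "q \<le> qbar" "q \<noteq> p"
  shows "V P q - V P p < (q - p) * P p"
proof (cases "p < q")
  case True
  define m where "m = (p+q)/2"
  have m: "p < m" "m < q" using True by (auto simp: m_def)
  have 1: "V P q - V P m \<le> (q - m) * P m" by (rule C) (use assms m in auto)
  have 2: "V P m - V P p \<le> (m - p) * P p" by (rule C) (use assms m in auto)
  have 3: "P m < P p" using Plt[of p m] assms m by auto
  have "(q - m) * P m < (q - m) * P p" using 3 m by simp
  then show ?thesis using 1 2 by (simp add: algebra_simps)
next
  case False
  then have qp: "q < p" using assms by auto
  define m where "m = (p+q)/2"
  have m: "q < m" "m < p" using qp by (auto simp: m_def)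
  have 1: "V P m - V P p \<le> (m - p) * P p" by (rule C) (use assms m in auto)
  have 2: "V P q - V P m \<le> (q - m) * P m" by (rule C) (use assms m in auto)
  have 3: "P p < P m" using Plt[of m p] assms m by auto
  have "(q - m) * P m < (q - m) * P p" using 3 m by (simp add: mult_strict_left_mono_neg)
  then show ?thesis using 1 2 by (simp add: algebra_simps)
qed

abbreviation "qf \<equiv> q_floor c P qbar"
abbreviation "qe \<equiv> q_eff P qbar"
definition "f q = V P q - q * P q"

lemma f_mono: "0 \<le> p \<Longrightarrow> p \<le> q \<Longrightarrow> q \<le> qbar \<Longrightarrow> f p \<le> f q"
proof -
  assume h: "0 \<le> p" "p \<le> q" "q \<le> qbar"
  have 1: "V P p - V P q \<le> (p - q) * P q" by (rule C) (use h in auto)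
  have 2: "P q \<le> P p" using Ple h by auto
  have "p * P q \<le> p * P p" using 2 h by (simp add: mult_left_mono)
  then show ?thesis using 1 unfolding f_def by (simp add: algebra_simps)
qed

lemma f_strict: "0 < p \<Longrightarrow> p < q \<Longrightarrow> q \<le> qbar \<Longrightarrow> f p < f q"
proof -
  assume h: "0 < p" "p < q" "q \<le> qbar"
  have 1: "V P p - V P q \<le> (p - q) * P q" by (rule C) (use h in auto)
  have 2: "P q < P p" using Plt h by auto
  have "p * P q < p * P p" using 2 h by (simp add: mult_strict_left_mono)
  then show ?thesis using 1 unfolding f_def by (simp add: algebra_simps)
qed

lemma V0: "V P 0 = 0" unfolding V_def by simp

lemma Vcont: "continuous_on {0..qbar} (V P)"
proof -
  have "P integrable_on {0..qbar}" using Pint[of 0 qbar] by simp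
  from indefinite_integral_continuous_1[OF this] show ?thesis unfolding V_def[abs_def] .
qed

lemma fcont: "continuous_on {0..qbar} f"
  unfolding f_def[abs_def]
  by (intro continuous_intros Vcont Pcont)

definition "q0 = (SOME q. q \<in> {0..qbar} \<and> P q = b \<and> TS c P b q > 0)"

lemma q0: "0 < q0" "q0 \<le> qbar" "P q0 = b" "f q0 > c"
proof -
  have h: "q0 \<in> {0..qbar} \<and> P q0 = b \<and> TS c P b q0 > 0"
    unfolding q0_def by (rule someI_ex) (use A2 in blast)
  then have pos: "q0 > 0" unfolding TS_def by (auto split: if_splits)
  then have "V P q0 - c - b * q0 > 0" using h unfolding TS_def by auto
  then show "f q0 > c" using h unfolding f_def by (auto simp: algebra_simps)
  show "0 < q0" "q0 \<le> qbar" "P q0 = b" using h pos by auto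
qed

lemma qf_ex: "\<exists>q. 0 < q \<and> q \<le> qbar \<and> V P q - q * P q = c"
proof -
  have "\<exists>x. 0 \<le> x \<and> x \<le> q0 \<and> f x = c"
  proof (rule IVT')
    show "continuous_on {0..q0} f" using continuous_on_subset[OF fcont] q0 by auto
  qed (use q0 c_pos in \<open>auto simp: f_def V0\<close>)
  then obtain x where x: "0 \<le> x" "x \<le> q0" "f x = c" by blast
  have "x \<noteq> 0" using x c_pos by (auto simp: f_def V0)
  then show ?thesis using x q0 unfolding f_def by (intro exI[of _ x]) auto
qed

lemma qf: "0 < qf" "qf \<le> qbar" "f qf = c"
proof -
  have "0 < qf \<and> qf \<le> qbar \<and> V P qf - qf * P qf = c"
    unfolding q_floor_def
  proof (rule theI')
    show "\<exists>!q. 0 < q \<and> q \<le> qbar \<and> V P q - q * P q = c"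
    proof (rule ex_ex1I)
      show "\<exists>q. 0 < q \<and> q \<le> qbar \<and> V P q - q * P q = c" by (rule qf_ex)
    next
      fix x y assume "0 < x \<and> x \<le> qbar \<and> V P x - x * P x = c" "0 < y \<and> y \<le> qbar \<and> V P y - y * P y = c"
      then show "x = y" using f_strict[of x y] f_strict[of y x] unfolding f_def
        by (cases x y rule: linorder_cases) auto
    qed
  qed
  then show "0 < qf" "qf \<le> qbar" "f qf = c" unfolding f_def by auto
qed

lemma qf_q0: "qf < q0"
proof (rule ccontr)
  assume "\<not> qf < q0"
  then have "f q0 \<le> f qf" using f_mono[of q0 qf] q0 qf by auto
  then show False using q0 qf by auto
qed

lemma f_ge: "qf \<le> x \<Longrightarrow> x \<le> qbar \<Longrightarrow> c \<le> f x"
  using f_mono[of qf x] qf by auto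

lemma f_gt: "qf < x \<Longrightarrow> x \<le> qbar \<Longrightarrow> c < f x"
  using f_strict[of qf x] qf by auto

lemma P_qf: "b < P qf"
  using Plt[of qf q0] qf q0 qf_q0 by auto

lemma qe_props: assumes "0 \<le> t" "t \<le> b" shows "0 \<le> qe t" "qe t \<le> qbar" "P (qe t) = t"
proof -
  have P0: "b \<le> P 0" using Ple[of 0 q0] q0 by auto
  have ex: "\<exists>x. 0 \<le> x \<and> x \<le> qbar \<and> P x = t"
    by (rule IVT2') (use assms P0 Pqbar qbar_pos Pcont in auto)
  have "0 \<le> qe t \<and> qe t \<le> qbar \<and> P (qe t) = t"
    unfolding q_eff_def
  proof (rule theI')
    show "\<exists>!q. 0 \<le> q \<and> q \<le> qbar \<and> P q = t"
    proof (rule ex_ex1I)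
      show "\<exists>q. 0 \<le> q \<and> q \<le> qbar \<and> P q = t" by (rule ex)
    next
      fix x y assume "0 \<le> x \<and> x \<le> qbar \<and> P x = t" "0 \<le> y \<and> y \<le> qbar \<and> P y = t"
      then show "x = y" using Plt[of x y] Plt[of y x]
        by (cases x y rule: linorder_cases) auto
    qed
  qed
  then show "0 \<le> qe t" "qe t \<le> qbar" "P (qe t) = t" by auto
qed

lemma qe_Theta: assumes "t \<in> {a..b}" shows "0 \<le> qe t" "qe t \<le> qbar" "P (qe t) = t"
  using qe_props[of t] assms a_pos by auto

lemma qe_anti: assumes "t \<in> {a..b}" "t' \<in> {a..b}" "t \<le> t'" shows "qe t' \<le> qe t"
proof (rule ccontr)
  assume "\<not> qe t' \<le> qe t"
  then have "P (qe t') < P (qe t)" using Plt[of "qe t" "qe t'"] qe_Theta[OF assms(1)] qe_Theta[OF assms(2)] by auto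
  then show False using qe_Theta[OF assms(1)] qe_Theta[OF assms(2)] assms by auto
qed

lemma qe_b: "qe b = q0"
proof -
  have "0 \<le> qe b" "qe b \<le> qbar" "P (qe b) = b" using qe_Theta[of b] ab by auto
  then show ?thesis using q0 Plt[of q0 "qe b"] Plt[of "qe b" q0]
    by (cases "qe b" q0 rule: linorder_cases) auto
qed

lemma qf_qe: "t \<in> {a..b} \<Longrightarrow> qf < qe t"
  using qe_anti[of t b] qe_b qf_q0 ab by auto

lemma qe_le_iff: "t \<in> {a..b} \<Longrightarrow> 0 \<le> x \<Longrightarrow> x \<le> qbar \<Longrightarrow> (qe t \<le> x \<longleftrightarrow> P x \<le> t)"
  using Plt[of x "qe t"] Ple[of "qe t" x] qe_Theta[of t] by force

definition "phi t x = (if qf \<le> x then V P x - c - t * x else x * (P qf - t))"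
definition "R0 x = (if qf \<le> x then 1 else x / qf)"
definition "Q0 x = (if qf \<le> x then x else if 0 < x then qf else 0)"

lemma Vqf: "V P qf = c + qf * P qf" using qf unfolding f_def by auto

lemma split_val: "0 \<le> x \<Longrightarrow> R0 x * TS c P t (Q0 x) = phi t x"
proof -
  assume x: "0 \<le> x"
  show ?thesis
  proof (cases "qf \<le> x")
    case True then show ?thesis using qf unfolding R0_def Q0_def phi_def TS_def by auto
  next
    case False
    show ?thesis
    proof (cases "x = 0")
      case True then show ?thesis using False unfolding R0_def Q0_def phi_def TS_def by auto
    next
      case F2: False
      then have "x > 0" using x by auto
      then show ?thesis using False qf unfolding R0_def Q0_def phi_def TS_def
        by (auto simp: field_simps Vqf)
    qed
  qed
qed

lemma split_prod: "0 \<le> x \<Longrightarrow> Q0 x * R0 x = x"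
  using qf unfolding R0_def Q0_def by auto

lemma R0_range: "0 \<le> x \<Longrightarrow> 0 \<le> R0 x \<and> R0 x \<le> 1"
  using qf unfolding R0_def by auto

lemma Q0_range: "0 \<le> x \<Longrightarrow> x \<le> qbar \<Longrightarrow> 0 \<le> Q0 x \<and> Q0 x \<le> qbar"
  using qf unfolding Q0_def by auto

lemma Q0_zero: "0 \<le> x \<Longrightarrow> (Q0 x = 0 \<longleftrightarrow> R0 x = 0) \<and> (R0 x = 0 \<longleftrightarrow> x = 0)"
  using qf unfolding R0_def Q0_def by auto

lemma claimA:
  assumes r: "0 \<le> r" "r \<le> 1" and q: "0 \<le> q" "q \<le> qbar" and qr: "q = 0 \<longleftrightarrow> r = 0"
  shows "r * TS c P t q \<le> phi t (q*r) \<and>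
         (r * TS c P t q = phi t (q*r) \<longrightarrow> r = R0 (q*r) \<and> q = Q0 (q*r))"
proof (cases "r = 0")
  case True
  then show ?thesis using qr qf unfolding phi_def R0_def Q0_def by auto
next
  case False
  then have rp: "0 < r" and qp: "0 < q" using r q qr by auto
  define x where "x = q * r"
  have xp: "0 < x" using rp qp by (simp add: x_def)
  have xq: "x \<le> q" using r qp by (simp add: x_def mult_left_le)
  have TSq: "TS c P t q = V P q - c - t * q" using qp by (simp add: TS_def)
  show ?thesis
  proof (cases "qf \<le> x")
    case True
    have phix: "phi t x = V P x - c - t * x" using True by (simp add: phi_def)
    show ?thesis
    proof (cases "r = 1")
      case True
      then show ?thesis using \<open>qf \<le> x\<close> unfolding x_def TSq phi_def R0_def Q0_def by auto
    next
      case False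
      then have r1: "r < 1" using r by auto
      then have xlt: "x < q" using qp rp by (simp add: x_def)
      have 1: "V P q - V P x < (q - x) * P x" by (rule Cs) (use xp xlt q in auto)
      have 2: "r * V P q < r * V P x + r * (q - x) * P x"
        using mult_strict_left_mono[OF 1 rp] by (simp add: algebra_simps)
      have 3: "r * (q - x) = (1 - r) * x" unfolding x_def by (simp add: algebra_simps)
      have 4: "c \<le> f x" by (rule f_ge) (use True xq q in auto)
      have 5: "(1 - r) * c \<le> (1 - r) * f x" using 4 r1 by (simp add: mult_left_mono)
      have 3: "r * (q - x) * P x = (1 - r) * x * P x" using 3 by simp
      have e1: "r * TS c P t q = r * V P q - r * c - t * x" by (simp add: TSq x_def algebra_simps)
      have e2: "r * (q - x) * P x = P x * x - r * (x * P x)" using 3 by (simp add: algebra_simps)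
      have e3: "(1 - r) * f x = f x - r * f x" by (simp add: algebra_simps)
      have e4: "r * f x = r * V P x - r * (x * P x)" unfolding f_def by (simp add: algebra_simps)
      have e5: "r * (q - x) * P x = (1 - r) * x * P x" by (rule 3)
      have g: "r * V P q < r * V P x + (1 - r) * x * P x" using 2 e5 by linarith
      have g2: "(1 - r) * c \<le> (1 - r) * V P x - (1 - r) * x * P x" using 5 unfolding f_def
        by (simp add: algebra_simps)
      have "r * TS c P t q < phi t x"
        using g g2 e1 phix by (simp add: algebra_simps)
      then show ?thesis unfolding x_def by simp
    qed
  next
    case False
    have phix: "phi t x = x * (P qf - t)" using False by (simp add: phi_def)
    show ?thesis
    proof (cases "q = qf")
      case True
      have h: "TS c P t q = qf * P qf - t * qf" using TSq True by (simp add: Vqf)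
      have "r * TS c P t q = r * (qf * P qf - t * qf)" by (simp add: h)
      also have "\<dots> = x * (P qf - t)" by (simp add: x_def True algebra_simps)
      finally have "r * TS c P t q = phi t x" using phix by simp
      moreover have "r = R0 x \<and> q = Q0 x" using False xp True qf unfolding R0_def Q0_def x_def
        by auto
      ultimately show ?thesis unfolding x_def by simp
    next
      case F2: False
      have 1: "V P q - V P qf < (q - qf) * P qf" by (rule Cs) (use qf q F2 in auto)
      then have "V P q - c < q * P qf" unfolding Vqf by (simp add: algebra_simps)
      then have "r * (V P q - c) < r * (q * P qf)" using rp by simp
      moreover have "r * TS c P t q = r * (V P q - c) - t * x" unfolding TSq by (simp add: x_def algebra_simps)
      moreover have "phi t x = r * (q * P qf) - t * x" using phix by (simp add: x_def algebra_simps)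
      ultimately have "r * TS c P t q < phi t x" by linarith
      then show ?thesis unfolding x_def by simp
    qed
  qed
qed

lemma phi_inc_strict:
  assumes t: "t \<in> {a..b}" and x: "0 \<le> x" "x < x'" "x' \<le> qe t"
  shows "phi t x < phi t x'"
proof -
  have tb: "t < P qf" using t P_qf by auto
  have qet: "0 \<le> qe t" "qe t \<le> qbar" "P (qe t) = t" using qe_Theta t by auto
  have Px': "t \<le> P x'" using Ple[of x' "qe t"] qet x by auto
  show ?thesis
  proof (cases "x' < qf")
    case True
    then show ?thesis using x tb unfolding phi_def by (auto intro: mult_strict_right_mono)
  next
    case False
    show ?thesis
    proof (cases "x < qf")
      case True
      have 1: "x * (P qf - t) < qf * (P qf - t)" using True tb by (simp add: mult_strict_right_mono)
      have 2: "V P qf - V P x' \<le> (qf - x') * P x'" by (rule C) (use qf False x qet in auto)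
      have 3: "(x' - qf) * t \<le> (x' - qf) * P x'" using Px' False by (simp add: mult_left_mono)
      show ?thesis using True False 1 2 3 unfolding phi_def Vqf by (auto simp: algebra_simps)
    next
      case F2: False
      have 2: "V P x - V P x' < (x - x') * P x'" by (rule Cs) (use qf F2 x qet in auto)
      have 3: "(x' - x) * t \<le> (x' - x) * P x'" using Px' x by (simp add: mult_left_mono)
      show ?thesis using F2 False 2 3 unfolding phi_def by (auto simp: algebra_simps)
    qed
  qed
qed

lemma phi_dec_strict:
  assumes t: "t \<in> {a..b}" and x: "qe t \<le> x" "x < x'" "x' \<le> qbar"
  shows "phi t x' < phi t x"
proof -
  have qet: "0 \<le> qe t" "qe t \<le> qbar" "P (qe t) = t" using qe_Theta t by auto
  have Px: "P x \<le> t" using Ple[of "qe t" x] qet x by auto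
  have h: "qf \<le> x" "qf \<le> x'" using qf_qe[OF t] x by auto
  have 2: "V P x' - V P x < (x' - x) * P x" by (rule Cs) (use qf h x qet in auto)
  have 3: "(x' - x) * P x \<le> (x' - x) * t" using Px x by (simp add: mult_left_mono)
  show ?thesis using h 2 3 unfolding phi_def by (auto simp: algebra_simps)
qed

lemma phi_inc: "t \<in> {a..b} \<Longrightarrow> 0 \<le> x \<Longrightarrow> x \<le> x' \<Longrightarrow> x' \<le> qe t \<Longrightarrow> phi t x \<le> phi t x'"
  using phi_inc_strict[of t x x'] by (cases "x = x'") auto

lemma phi_max: assumes t: "t \<in> {a..b}" and x: "0 \<le> x" "x \<le> qbar"
  shows "phi t x \<le> phi t (qe t)" "x \<noteq> qe t \<Longrightarrow> phi t x < phi t (qe t)"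
proof -
  have strict: "phi t x < phi t (qe t)" if "x \<noteq> qe t"
  proof (cases "x < qe t")
    case True then show ?thesis using phi_inc_strict[OF t x(1) True] by auto
  next
    case False
    then have "qe t < x" using that by auto
    then show ?thesis using phi_dec_strict[OF t order_refl \<open>qe t < x\<close> x(2)] by auto
  qed
  show "x \<noteq> qe t \<Longrightarrow> phi t x < phi t (qe t)" by (rule strict)
  show "phi t x \<le> phi t (qe t)" using strict by (cases "x = qe t") auto
qed

end

locale mech = setting +
  fixes r q u :: "real \<Rightarrow> real"
  assumes M: "IC_IR a b qbar r q u"
begin

definition "x t = q t * r t"
definition "y t = min (x t) (qe t)"
definition "z t = (if t \<le> a then qe a else Inf (y ` {a..<t}))"

lemma mechp: "t \<in> {a..b} \<Longrightarrow> 0 \<le> r t \<and> r t \<le> 1 \<and> 0 \<le> q t \<and> q t \<le> qbar \<and> (q t = 0 \<longleftrightarrow> r t = 0)"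
  using M unfolding IC_IR_def mechanism_def by auto

lemma ICp: "s \<in> {a..b} \<Longrightarrow> t \<in> {a..b} \<Longrightarrow> u t + (t - s) * x t \<le> u s"
  using M unfolding IC_IR_def IC_def x_def by (auto simp: mult.assoc)

lemma IRp: "t \<in> {a..b} \<Longrightarrow> 0 \<le> u t"
  using M unfolding IC_IR_def IR_def by auto

lemma x_range: "t \<in> {a..b} \<Longrightarrow> 0 \<le> x t \<and> x t \<le> qbar"
proof -
  assume t: "t \<in> {a..b}"
  have "q t * r t \<le> q t * 1" using mechp[OF t] by (intro mult_left_mono) auto
  then show ?thesis using mechp[OF t] unfolding x_def by auto
qed

lemma x_anti: "s \<in> {a..b} \<Longrightarrow> t \<in> {a..b} \<Longrightarrow> s \<le> t \<Longrightarrow> x t \<le> x s"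
proof -
  assume h: "s \<in> {a..b}" "t \<in> {a..b}" "s \<le> t"
  show ?thesis
  proof (cases "s = t")
    case False
    then have st: "s < t" using h by simp
    have "(t - s) * x t \<le> (t - s) * x s" using ICp[OF h(1) h(2)] ICp[OF h(2) h(1)] by (simp add: algebra_simps)
    then show ?thesis using st by simp
  qed simp
qed

lemma y_nonneg: "s \<in> {a..b} \<Longrightarrow> 0 \<le> y s"
  using x_range qe_Theta unfolding y_def by auto

lemma bdd: "t \<le> b \<Longrightarrow> bdd_below (y ` {a..<t})"
  by (rule bdd_belowI[of _ 0]) (auto intro: y_nonneg)

lemma Z1: "t \<in> {a..b} \<Longrightarrow> s \<in> {a..<t} \<Longrightarrow> z t \<le> y s"
proof -
  assume t: "t \<in> {a..b}" and s: "s \<in> {a..<t}"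
  then have "a < t" by auto
  then show ?thesis unfolding z_def using cInf_lower[OF imageI[OF s] bdd[of t]] t by auto
qed

lemma Z2: "t \<in> {a<..b} \<Longrightarrow> (\<And>s. s \<in> {a..<t} \<Longrightarrow> L \<le> y s) \<Longrightarrow> L \<le> z t"
proof -
  assume t: "t \<in> {a<..b}" and L: "\<And>s. s \<in> {a..<t} \<Longrightarrow> L \<le> y s"
  have "{a..<t} \<noteq> {}" using t by auto
  then have "L \<le> Inf (y ` {a..<t})" by (intro cInf_greatest) (use L in auto)
  then show ?thesis using t unfolding z_def by auto
qed

lemma za: "z a = qe a" unfolding z_def by simp

lemma Z_nonneg: "t \<in> {a..b} \<Longrightarrow> 0 \<le> z t"
proof -
  assume t: "t \<in> {a..b}"
  show ?thesis
  proof (cases "t = a")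
    case True then show ?thesis using za qe_Theta[of a] ab by auto
  next
    case False
    then show ?thesis using t by (intro Z2) (auto intro: y_nonneg)
  qed
qed

lemma Z_le_qe: assumes t: "t \<in> {a..b}" shows "z t \<le> qe t"
proof (cases "t = a")
  case True then show ?thesis using za by simp
next
  case False
  then have ta: "a < t" using t by auto
  show ?thesis
  proof (rule ccontr)
    assume "\<not> z t \<le> qe t"
    then have L: "qe t < z t" by simp
    have La: "z t \<le> y a" by (rule Z1) (use t ta in auto)
    have Lq: "z t \<le> qbar" using La qe_Theta[of a] ab unfolding y_def by auto
    have PL: "P (z t) < t" using Plt[of "qe t" "z t"] qe_Theta[OF t] L Lq by auto
    have ge: "s \<le> P (z t)" if s: "s \<in> {a..<t}" for s
    proof -
      have s': "s \<in> {a..b}" using s t by auto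
      have "z t \<le> qe s" using Z1[OF t s] unfolding y_def by auto
      then have "P (qe s) \<le> P (z t)" using Ple[of "z t" "qe s"] qe_Theta[OF s'] Z_nonneg[OF t] by auto
      then show ?thesis using qe_Theta[OF s'] by auto
    qed
    define s where "s = max a ((P (z t) + t) / 2)"
    have "s \<in> {a..<t}" using PL ta unfolding s_def by auto
    moreover have "P (z t) < s" using PL unfolding s_def max_def by auto
    ultimately show False using ge by fastforce
  qed
qed

lemma Z_range: "t \<in> {a..b} \<Longrightarrow> 0 \<le> z t \<and> z t \<le> qbar"
  using Z_nonneg Z_le_qe qe_Theta by fastforce

lemma Z_anti: assumes s: "s \<in> {a..b}" and t: "t \<in> {a..b}" and st: "s \<le> t" shows "z t \<le> z s"
proof (cases "s = a")
  case True
  show ?thesis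
  proof (cases "t = a")
    case False
    then have "z t \<le> y a" using t by (intro Z1) auto
    then show ?thesis using True za unfolding y_def by auto
  qed (use True in simp)
next
  case False
  then have "s \<in> {a<..b}" using s by auto
  then show ?thesis
  proof (rule Z2)
    fix v assume "v \<in> {a..<s}"
    then show "z t \<le> y v" using t st by (intro Z1) auto
  qed
qed

lemma Z_anti': "anti {a..b} z" unfolding anti_def using Z_anti by blast

lemma Z_ge_x: assumes t: "t \<in> {a..b}" and xt: "x t \<le> qe t" shows "x t \<le> z t"
proof (cases "t = a")
  case True then show ?thesis using xt za by simp
next
  case False
  then have "t \<in> {a<..b}" using t by auto
  then show ?thesis
  proof (rule Z2)
    fix s assume s: "s \<in> {a..<t}"
    then have s': "s \<in> {a..b}" using t by auto
    have "x t \<le> x s" using x_anti[OF s' t] s by auto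
    moreover have "qe t \<le> qe s" using qe_anti[OF s' t] s by auto
    ultimately show "x t \<le> y s" using xt unfolding y_def by auto
  qed
qed

lemma Z_eq_qe: assumes t: "t \<in> {a..b}" and xt: "qe t < x t" shows "z t = qe t"
proof (cases "t = a")
  case True then show ?thesis using za by simp
next
  case False
  then have "t \<in> {a<..b}" using t by auto
  then have "qe t \<le> z t"
  proof (rule Z2)
    fix s assume s: "s \<in> {a..<t}"
    then have s': "s \<in> {a..b}" using t by auto
    have "x t \<le> x s" using x_anti[OF s' t] s by auto
    moreover have "qe t \<le> qe s" using qe_anti[OF s' t] s by auto
    ultimately show "qe t \<le> y s" using xt unfolding y_def by auto
  qed
  then show ?thesis using Z_le_qe[OF t] by simp
qed

lemma Z_u: assumes st: "a \<le> s" "s < t" "t \<le> b" shows "(t - s) * z t \<le> u s - u t"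
proof -
  have s: "s \<in> {a..b}" and t: "t \<in> {a..b}" using st by auto
  have zt0: "0 \<le> z t" using Z_nonneg[OF t] .
  have bnd: "(v - s) * z t \<le> u s - u t" if v: "v \<in> {s..<t}" for v
  proof -
    have v': "v \<in> {a..b}" using v st by auto
    have 1: "u v + (v - s) * x v \<le> u s" using ICp[OF s v'] .
    have 2: "u t + (t - v) * x t \<le> u v" using ICp[OF v' t] .
    have 3: "0 \<le> (t - v) * x t" using x_range[OF t] v by auto
    have "z t \<le> y v" using Z1[OF t] v st by auto
    then have "z t \<le> x v" unfolding y_def by auto
    then have 4: "(v - s) * z t \<le> (v - s) * x v" using v by (intro mult_left_mono) auto
    show ?thesis using 1 2 3 4 by linarith
  qed
  show ?thesis
  proof (rule ccontr)
    assume "\<not> ?thesis"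
    then have lt: "u s - u t < (t - s) * z t" by simp
    have D0: "0 \<le> u s - u t" using bnd[of s] st by auto
    then have zp: "0 < z t" using lt zt0 st by (cases "z t = 0") auto
    define k where "k = (u s - u t) / z t"
    define v where "v = s + (k + (t - s)) / 2"
    have q1: "k < t - s" using lt zp by (simp add: field_simps k_def)
    have "0 \<le> k" using D0 zp by (simp add: k_def)
    then have "s \<le> v" using q1 unfolding v_def by (simp add: field_simps)
    moreover have "v < t" using q1 unfolding v_def by (simp add: field_simps)
    ultimately have "v \<in> {s..<t}" by auto
    moreover have "u s - u t < (v - s) * z t"
    proof -
      have "(v - s) * z t = ((u s - u t) + (t - s) * z t) / 2" using zp unfolding v_def k_def
        by (simp add: field_simps)
      then show ?thesis using lt by simp
    qed
    ultimately show False using bnd by fastforce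
  qed
qed

lemma Z_lc: assumes t: "t \<in> {a<..b}" shows "(z \<longlongrightarrow> z t) (at_left t)"
proof (rule order_tendstoI)
  fix w assume w: "w < z t"
  have "\<forall>v>a. v < t \<longrightarrow> w < z v"
  proof (intro allI impI)
    fix v assume v: "a < v" "v < t"
    have "z t \<le> z v" by (rule Z_anti) (use v t in auto)
    then show "w < z v" using w by simp
  qed
  then show "eventually (\<lambda>v. w < z v) (at_left t)"
    using t by (subst eventually_at_left) auto
next
  fix w assume w: "z t < w"
  have ta: "a < t" using t by auto
  then have "z t = Inf (y ` {a..<t})" unfolding z_def by auto
  then have "Inf (y ` {a..<t}) < w" using w by simp
  then obtain s where s: "s \<in> {a..<t}" "y s < w"
    using cInf_lessD[of "y ` {a..<t}" w] ta by auto
  have "\<forall>v>s. v < t \<longrightarrow> z v < w"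
  proof (intro allI impI)
    fix v assume v: "s < v" "v < t"
    have "z v \<le> y s" by (rule Z1) (use s v t in auto)
    then show "z v < w" using s by simp
  qed
  then show "eventually (\<lambda>v. z v < w) (at_left t)"
    using s ta by (subst eventually_at_left) auto
qed


definition "r' t = R0 (z t)"
definition "q' t = Q0 (z t)"
definition "u' t = integral {t..b} z"

lemma z_int: "a \<le> s \<Longrightarrow> s \<le> e \<Longrightarrow> e \<le> b \<Longrightarrow> z integrable_on {s..e}"
  by (rule anti_int, rule anti_sub[OF Z_anti']) auto

lemma u'_split: "a \<le> s \<Longrightarrow> s \<le> t \<Longrightarrow> t \<le> b \<Longrightarrow> u' s = integral {s..t} z + u' t"
  unfolding u'_def
  using Henstock_Kurzweil_Integration.integral_combine[where f=z and a=s and c=t and b=b] z_int[of s b]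
  by auto

lemma new_IC_IR: "IC_IR a b qbar r' q' u'"
proof -
  have prod: "q' t * r' t = z t" if "t \<in> {a..b}" for t
    unfolding q'_def r'_def using split_prod Z_nonneg that by auto
  have mech: "mechanism a b qbar r' q' u'"
    unfolding mechanism_def r'_def q'_def using R0_range Q0_range Q0_zero Z_range by auto
  have ic: "IC a b r' q' u'"
    unfolding IC_def
  proof (intro ballI)
    fix s t assume s: "s \<in> {a..b}" and t: "t \<in> {a..b}"
    have pt: "(t - s) * q' t * r' t = (t - s) * z t" using prod[OF t] by (simp add: mult.assoc)
    show "u' t + (t - s) * q' t * r' t \<le> u' s"
      unfolding pt
    proof (cases "s \<le> t")
      case True
      have "(t - s) * z t \<le> integral {s..t} z"
        by (rule anti_int_bounds(1)) (rule anti_sub[OF Z_anti'], use s t True in auto)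
      then show "u' t + (t - s) * z t \<le> u' s" using u'_split[of s t] s t True by auto
    next
      case False
      have "integral {t..s} z \<le> (s - t) * z t"
        by (rule anti_int_bounds(2)) (rule anti_sub[OF Z_anti'], use s t False in auto)
      then show "u' t + (t - s) * z t \<le> u' s" using u'_split[of t s] s t False
        by (auto simp: algebra_simps)
    qed
  qed
  have ir: "IR a b u'"
    unfolding IR_def u'_def
    by (auto intro!: integral_nonneg z_int Z_nonneg)
  show ?thesis using mech ic ir unfolding IC_IR_def by auto
qed

lemma u'_le: assumes t: "t \<in> {a..b}" shows "u' t \<le> u t - u b"
  unfolding u'_def
proof (rule int_le_w[where B = qbar])
  show "anti {t..b} z" by (rule anti_sub[OF Z_anti']) (use t in auto)
  show "t \<le> b" using t by auto
  show "\<And>v. v \<in> {t..b} \<Longrightarrow> 0 \<le> z v \<and> z v \<le> qbar" using Z_range t by auto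
  show "\<And>v w. t \<le> v \<Longrightarrow> v < w \<Longrightarrow> w \<le> b \<Longrightarrow> (w - v) * z w \<le> u v - u w"
    using Z_u t by auto
qed

lemma u'_le_u: "t \<in> {a..b} \<Longrightarrow> u' t \<le> u t"
  using u'_le IRp[of b] ab by fastforce

lemma ub_zero: "u' b = 0" unfolding u'_def by simp

lemma phi_z: assumes t: "t \<in> {a..b}" shows "phi t (x t) \<le> phi t (z t)"
    "phi t (x t) = phi t (z t) \<Longrightarrow> x t = z t"
proof -
  have xr: "0 \<le> x t" "x t \<le> qbar" using x_range[OF t] by auto
  have "phi t (x t) \<le> phi t (z t) \<and> (phi t (x t) = phi t (z t) \<longrightarrow> x t = z t)"
  proof (cases "x t \<le> qe t")
    case True
    have xz: "x t \<le> z t" by (rule Z_ge_x[OF t True])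
    have zq: "z t \<le> qe t" by (rule Z_le_qe[OF t])
    show ?thesis
    proof (cases "x t = z t")
      case False
      then have "x t < z t" using xz by simp
      then show ?thesis using phi_inc_strict[OF t xr(1) _ zq] by auto
    qed simp
  next
    case False
    then have zq: "z t = qe t" using Z_eq_qe[OF t] by simp
    show ?thesis using phi_max[OF t xr] False zq by auto
  qed
  then show "phi t (x t) \<le> phi t (z t)" "phi t (x t) = phi t (z t) \<Longrightarrow> x t = z t" by auto
qed

lemma TS_le: assumes t: "t \<in> {a..b}" shows "r t * TS c P t (q t) \<le> phi t (x t)"
    "r t * TS c P t (q t) = phi t (x t) \<Longrightarrow> r t = R0 (x t) \<and> q t = Q0 (x t)"
  using claimA[of "r t" "q t" t] mechp[OF t] unfolding x_def by auto

lemma RS_new: assumes t: "t \<in> {a..b}"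
  shows "RS c P \<alpha> t r' q' u' - RS c P \<alpha> t r q u =
    (phi t (z t) - r t * TS c P t (q t)) + (1 - \<alpha>) * (u t - u' t)"
  unfolding RS_def r'_def q'_def using split_val[of "z t" t] Z_nonneg[OF t]
  by (simp add: algebra_simps)

lemma RS_ge: assumes t: "t \<in> {a..b}"
  shows "RS c P \<alpha> t r q u \<le> RS c P \<alpha> t r' q' u'"
proof -
  have "0 \<le> (1 - \<alpha>) * (u t - u' t)" using u'_le_u[OF t] al1 by simp
  moreover have "r t * TS c P t (q t) \<le> phi t (z t)" using TS_le(1)[OF t] phi_z(1)[OF t] by linarith
  ultimately show ?thesis using RS_new[OF t] by linarith
qed

lemma RS_eq: assumes t: "t \<in> {a..b}" and eq: "RS c P \<alpha> t r q u = RS c P \<alpha> t r' q' u'"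
  shows "r t = R0 (z t)" "q t = Q0 (z t)" "u t = u' t"
proof -
  have A: "0 \<le> (1 - \<alpha>) * (u t - u' t)" using u'_le_u[OF t] al1 by simp
  have B1: "r t * TS c P t (q t) \<le> phi t (x t)" by (rule TS_le(1)[OF t])
  have B2: "phi t (x t) \<le> phi t (z t)" by (rule phi_z(1)[OF t])
  have S: "(phi t (z t) - r t * TS c P t (q t)) + (1 - \<alpha>) * (u t - u' t) = 0" using RS_new[OF t] eq by simp
  then have e1: "r t * TS c P t (q t) = phi t (x t)" and e2: "phi t (x t) = phi t (z t)"
    and e3: "(1 - \<alpha>) * (u t - u' t) = 0" using A B1 B2 by linarith+
  have xz: "x t = z t" by (rule phi_z(2)[OF t e2])
  show "r t = R0 (z t)" "q t = Q0 (z t)" using TS_le(2)[OF t e1] xz by auto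
  show "u t = u' t" using e3 al1 by simp
qed

end

context setting begin

lemma good:
  fixes r q u z :: "real \<Rightarrow> real"
  assumes M: "IC_IR a b qbar r q u" and ub: "u b = 0"
    and an: "anti {a..b} z" and zr: "\<And>t. t \<in> {a..b} \<Longrightarrow> 0 \<le> z t \<and> z t \<le> qe t"
    and za: "z a = qe a"
    and lc: "\<And>t. t \<in> {a<..b} \<Longrightarrow> (z \<longlongrightarrow> z t) (at_left t)"
    and rq: "\<And>t. t \<in> {a..b} \<Longrightarrow> r t = R0 (z t) \<and> q t = Q0 (z t)"
  shows "floor_randomized a b qbar c P r q u \<and> left_continuous_mech a b r q \<and>
         downward_distortion a b P qbar q"
proof -
  have zan: "z t \<le> z s" if "s \<in> {a..b}" "t \<in> {a..b}" "s \<le> t" for s t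
    using an that unfolding anti_def by auto
  define T1 where "T1 = {t \<in> {a..b}. qf \<le> z t}"
  define T01 where "T01 = {t \<in> {a..b}. 0 < z t \<and> z t < qf}"
  define T0 where "T0 = {t \<in> {a..b}. z t = 0}"
  have iv1: "is_interval T1" unfolding is_interval_1 T1_def
  proof (intro ballI allI impI)
    fix s t v assume h: "s \<in> {t \<in> {a..b}. qf \<le> z t}" "t \<in> {t \<in> {a..b}. qf \<le> z t}" "s \<le> v \<and> v \<le> t"
    then have "z t \<le> z v" using zan[of v t] by auto
    then show "v \<in> {t \<in> {a..b}. qf \<le> z t}" using h by auto
  qed
  have iv01: "is_interval T01" unfolding is_interval_1 T01_def
  proof (intro ballI allI impI)
    fix s t v assume h: "s \<in> {t \<in> {a..b}. 0 < z t \<and> z t < qf}" "t \<in> {t \<in> {a..b}. 0 < z t \<and> z t < qf}" "s \<le> v \<and> v \<le> t"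
    then have "z t \<le> z v" "z v \<le> z s" using zan[of v t] zan[of s v] by auto
    then show "v \<in> {t \<in> {a..b}. 0 < z t \<and> z t < qf}" using h by auto
  qed
  have iv0: "is_interval T0" unfolding is_interval_1 T0_def
  proof (intro ballI allI impI)
    fix s t v assume h: "s \<in> {t \<in> {a..b}. z t = 0}" "t \<in> {t \<in> {a..b}. z t = 0}" "s \<le> v \<and> v \<le> t"
    then have "z v \<le> z s" using zan[of s v] by auto
    then show "v \<in> {t \<in> {a..b}. z t = 0}" using h zr[of v] by force
  qed
  have cover: "T1 \<union> T01 \<union> T0 = {a..b}" unfolding T1_def T01_def T0_def using zr by force
  have disj: "T1 \<inter> T01 = {}" "T1 \<inter> T0 = {}" "T01 \<inter> T0 = {}"
    unfolding T1_def T01_def T0_def using qf by auto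
  have ord1: "\<forall>v\<in>T0. \<forall>w\<in>T01. w < v"
  proof (intro ballI)
    fix v w assume "v \<in> T0" "w \<in> T01"
    then show "w < v" unfolding T0_def T01_def using zan[of v w] by force
  qed
  have ord2: "\<forall>v\<in>T01. \<forall>w\<in>T1. w < v"
  proof (intro ballI)
    fix v w assume "v \<in> T01" "w \<in> T1"
    then show "w < v" unfolding T1_def T01_def using zan[of v w] by force
  qed
  have p1: "\<forall>t\<in>T1. q t \<ge> qf \<and> r t = 1" unfolding T1_def using rq unfolding R0_def Q0_def by auto
  have p01: "\<forall>t\<in>T01. q t = qf \<and> 0 < r t \<and> r t < 1" unfolding T01_def using rq qf unfolding R0_def Q0_def
    by auto
  have p0: "\<forall>t\<in>T0. q t = 0 \<and> r t = 0" unfolding T0_def using rq qf unfolding R0_def Q0_def by auto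
  have FR: "floor_randomized a b qbar c P r q u"
    unfolding floor_randomized_def
    using M ub iv1 iv01 iv0 cover disj ord1 ord2 p1 p01 p0 by blast
  have LC: "left_continuous_mech a b r q"
    unfolding left_continuous_mech_def
  proof (intro ballI)
    fix t assume t: "t \<in> {a<..b}"
    have ev: "eventually (\<lambda>v. z v = q v * r v) (at_left t)"
    proof -
      have "\<forall>v>a. v < t \<longrightarrow> z v = q v * r v"
        using rq split_prod zr t by auto
      then show ?thesis using t by (subst eventually_at_left) auto
    qed
    have zt: "z t = q t * r t" using rq split_prod zr t by auto
    have "((\<lambda>v. q v * r v) \<longlongrightarrow> q t * r t) (at_left t)"
      using tendsto_cong[OF ev] lc[OF t] zt by simp
    then show "continuous (at_left t) (\<lambda>v. q v * r v)"
      unfolding continuous_within by simp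
  qed
  have DD: "downward_distortion a b P qbar q"
    unfolding downward_distortion_def
  proof
    show "\<forall>t\<in>{a..b}. q t \<le> qe t"
    proof
      fix t assume t: "t \<in> {a..b}"
      show "q t \<le> qe t" using rq[OF t] zr[OF t] qf_qe[OF t] unfolding Q0_def by auto
    qed
    show "q a = qe a" using rq[of a] za qf_qe[of a] ab unfolding Q0_def by auto
  qed
  show ?thesis using FR LC DD by blast
qed

end


context mech begin

lemma new_good: "floor_randomized a b qbar c P r' q' u' \<and> left_continuous_mech a b r' q' \<and>
    downward_distortion a b P qbar q'"
  by (rule good[OF new_IC_IR ub_zero Z_anti'])
     (use Z_nonneg Z_le_qe za Z_lc in \<open>auto simp: r'_def q'_def\<close>)

lemma undom_good:
  assumes nd: "\<not> (\<exists>r1 q1 u1. dominates a b qbar c P \<alpha> r1 q1 u1 r q u)"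
  shows "floor_randomized a b qbar c P r q u \<and> left_continuous_mech a b r q \<and>
    downward_distortion a b P qbar q"
proof -
  have eq: "RS c P \<alpha> t r q u = RS c P \<alpha> t r' q' u'" if t: "t \<in> {a..b}" for t
  proof (rule ccontr)
    assume "RS c P \<alpha> t r q u \<noteq> RS c P \<alpha> t r' q' u'"
    then have "RS c P \<alpha> t r q u < RS c P \<alpha> t r' q' u'" using RS_ge[OF t] by simp
    then have "dominates a b qbar c P \<alpha> r' q' u' r q u"
      unfolding dominates_def using new_IC_IR M RS_ge t by blast
    then show False using nd by blast
  qed
  have ub: "u b = 0" using RS_eq(3)[OF _ eq[of b]] ab ub_zero by auto
  show ?thesis
    by (rule good[OF M ub Z_anti']) (use Z_nonneg Z_le_qe za Z_lc RS_eq eq in auto)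
qed

end



theorem theorem2:
  fixes tlo thi c qbar \<alpha> :: real and P r q u :: "real \<Rightarrow> real"
  assumes "0 < tlo" and "tlo < thi" and "0 < c" and "0 < qbar"
    and "continuous_on {0..qbar} P"
    and "\<forall>x y. 0 \<le> x \<longrightarrow> x < y \<longrightarrow> y \<le> qbar \<longrightarrow> P y < P x"
    and "P qbar = 0"
    and A2: "\<exists>qe\<in>{0..qbar}. P qe = thi \<and> TS c P thi qe > 0"
    and "0 \<le> \<alpha>" and "\<alpha> < 1"
    and "IC_IR tlo thi qbar r q u"
  shows "(undominated tlo thi qbar c P \<alpha> r q u \<longrightarrow>
            floor_randomized tlo thi qbar c P r q u \<and> left_continuous_mech tlo thi r q \<and>
            downward_distortion tlo thi P qbar q)
       \<and> ((\<exists>r' q' u'. dominates tlo thi qbar c P \<alpha> r' q' u' r q u) \<longrightarrow>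
            (\<exists>r' q' u'. dominates tlo thi qbar c P \<alpha> r' q' u' r q u \<and>
               floor_randomized tlo thi qbar c P r' q' u' \<and> left_continuous_mech tlo thi r' q' \<and>
               downward_distortion tlo thi P qbar q'))"
  proof -
  interpret s: setting tlo thi c qbar \<alpha> P
    by unfold_locales (use assms in auto)
  interpret m: mech tlo thi c qbar \<alpha> P r q u
    by unfold_locales (use assms in auto)
  show ?thesis
  proof (rule conjI; rule impI)
    assume "undominated tlo thi qbar c P \<alpha> r q u"
    then have "\<not> (\<exists>r1 q1 u1. dominates tlo thi qbar c P \<alpha> r1 q1 u1 r q u)"
      unfolding undominated_def by blast
    then show "floor_randomized tlo thi qbar c P r q u \<and> left_continuous_mech tlo thi r q \<and>
            downward_distortion tlo thi P qbar q" by (rule m.undom_good)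
  next
    assume "\<exists>r' q' u'. dominates tlo thi qbar c P \<alpha> r' q' u' r q u"
    then obtain r1 q1 u1 where d: "dominates tlo thi qbar c P \<alpha> r1 q1 u1 r q u" by blast
    then have M1: "IC_IR tlo thi qbar r1 q1 u1" unfolding dominates_def by blast
    interpret m1: mech tlo thi c qbar \<alpha> P r1 q1 u1
      by unfold_locales (use assms M1 in auto)
    have "dominates tlo thi qbar c P \<alpha> m1.r' m1.q' m1.u' r q u"
      unfolding dominates_def
    proof (intro conjI)
      show "IC_IR tlo thi qbar m1.r' m1.q' m1.u'" by (rule m1.new_IC_IR)
      show "IC_IR tlo thi qbar r q u" using assms by blast
      show "\<forall>t\<in>{tlo..thi}. RS c P \<alpha> t r q u \<le> RS c P \<alpha> t m1.r' m1.q' m1.u'"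
        using d m1.RS_ge unfolding dominates_def by (meson order_trans)
      show "\<exists>t\<in>{tlo..thi}. RS c P \<alpha> t r q u < RS c P \<alpha> t m1.r' m1.q' m1.u'"
        using d m1.RS_ge unfolding dominates_def by (meson less_le_trans)
    qed
    then show "\<exists>r' q' u'. dominates tlo thi qbar c P \<alpha> r' q' u' r q u \<and>
               floor_randomized tlo thi qbar c P r' q' u' \<and> left_continuous_mech tlo thi r' q' \<and>
               downward_distortion tlo thi P qbar q'"
      using m1.new_good by blast
  qed
qed

end
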